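(* Let $(\mathcal{S},\mathcal{A},P,r,\gamma)$ be a discounted Markov decision process with finite state set $\mathcal{S}$ of size $n$, finite action set $\mathcal{A}$, transition probabilities $P(s'\mid s,a)$, expected rewards $r(s,a)$ and discount factor $\gamma\in[0,1)$. Let $V^*$ be the optimal value function and suppose: (i) (uniqueness of the optimal policy) there is a deterministic policy $\pi^*$ and a number $\delta>0$ such that for every state $s$ and every action $a'\neq \pi^*(s)$, $$ r(s,\pi^*(s))+\gamma\sum_{s'}P(s'\mid s,\pi^*(s))V^*(s') - r(s,a') - \gamma\sum_{s'}P(s'\mid s,a')V^*(s') \ge \delta;$$ (ii) the Markov chain with transition matrix $P^*(s,s')=P(s'\mid s,\pi^*(s))$ is irreducible and aperiodic. Let $N\ge 1$ be an integer such that all entries of $(P^* )^N$ are strictly positive. Run synchronous value iteration without learning rate from an initial vector $V_0\in\mathbb{R}^{\mathcal{S}}$, i.e. $V_{t+1}(s)=\max_{a}\big[r(s,a)+\gamma\sum_{s'}P(s'\mid s,a)V_t(s')\big]$ for all $s$, and let $e_t=V_t-V^*$. Then there exists $\tau\in(0,1)$ such that $$\operatorname{span}(e_N)\le \gamma^N\,\tau\,\operatorname{span}(e_0).$$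
   Context: For a vector $e\in\mathbb{R}^{\mathcal{S}}$, $\operatorname{span}(e)=\max_s e(s)-\min_s e(s)$. The optimal value function is $V^*(s)=\max_\pi \mathbb{E}\big[\sum_{t\ge0}\gamma^t r(s_t,\pi(s_t))\mid s_0=s\big]$. Such an $N$ exists under (ii) (e.g. $N=n^2-2n+2$ works). The constant $\tau$ may depend on the MDP and on the initial vector $V_0$. *)

theory Defs
  imports Complex_Main
begin

text \<open>A finite MDP: states of finite type 's, actions of finite type 'a,
  transition kernel P s a s' = P(s' | s,a), rewards r s a, discount g.\<close>

definition stochastic :: "('s::finite \<Rightarrow> 'a \<Rightarrow> 's \<Rightarrow> real) \<Rightarrow> bool" where
  "stochastic P \<longleftrightarrow> (\<forall>s a s'. P s a s' \<ge> 0) \<and> (\<forall>s a. (\<Sum>s'\<in>UNIV. P s a s') = 1)"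

fun policy_pow :: "('s::finite \<Rightarrow> 'a \<Rightarrow> 's \<Rightarrow> real) \<Rightarrow> ('s \<Rightarrow> 'a) \<Rightarrow> nat \<Rightarrow> 's \<Rightarrow> 's \<Rightarrow> real" where
  "policy_pow P pol 0 s s' = (if s = s' then 1 else 0)"
| "policy_pow P pol (Suc t) s s' = (\<Sum>u\<in>UNIV. P s (pol s) u * policy_pow P pol t u s')"

text \<open>Value of a deterministic stationary policy:
  E[ sum_t g^t r(s_t, pol(s_t)) | s_0 = s ].\<close>
definition policy_value ::
  "('s::finite \<Rightarrow> 'a \<Rightarrow> 's \<Rightarrow> real) \<Rightarrow> ('s \<Rightarrow> 'a \<Rightarrow> real) \<Rightarrow> real \<Rightarrow> ('s \<Rightarrow> 'a) \<Rightarrow> 's \<Rightarrow> real" where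
  "policy_value P r g pol s =
     (\<Sum>t. g ^ t * (\<Sum>s'\<in>UNIV. policy_pow P pol t s s' * r s' (pol s')))"

definition opt_value ::
  "('s::finite \<Rightarrow> 'a::finite \<Rightarrow> 's \<Rightarrow> real) \<Rightarrow> ('s \<Rightarrow> 'a \<Rightarrow> real) \<Rightarrow> real \<Rightarrow> 's \<Rightarrow> real" where
  "opt_value P r g s = Max (range (\<lambda>pol. policy_value P r g pol s))"

definition bellman ::
  "('s::finite \<Rightarrow> 'a::finite \<Rightarrow> 's \<Rightarrow> real) \<Rightarrow> ('s \<Rightarrow> 'a \<Rightarrow> real) \<Rightarrow> real \<Rightarrow> ('s \<Rightarrow> real) \<Rightarrow> 's \<Rightarrow> real" where
  "bellman P r g V s = Max (range (\<lambda>a. r s a + g * (\<Sum>s'\<in>UNIV. P s a s' * V s')))"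

fun value_iter ::
  "('s::finite \<Rightarrow> 'a::finite \<Rightarrow> 's \<Rightarrow> real) \<Rightarrow> ('s \<Rightarrow> 'a \<Rightarrow> real) \<Rightarrow> real \<Rightarrow> ('s \<Rightarrow> real) \<Rightarrow> nat \<Rightarrow> 's \<Rightarrow> real" where
  "value_iter P r g V0 0 = V0"
| "value_iter P r g V0 (Suc t) = bellman P r g (value_iter P r g V0 t)"

definition span :: "('s::finite \<Rightarrow> real) \<Rightarrow> real" where
  "span e = Max (range e) - Min (range e)"

fun mpow :: "('s::finite \<Rightarrow> 's \<Rightarrow> real) \<Rightarrow> nat \<Rightarrow> 's \<Rightarrow> 's \<Rightarrow> real" where
  "mpow M 0 s s' = (if s = s' then 1 else 0)"
| "mpow M (Suc k) s s' = (\<Sum>u\<in>UNIV. M s u * mpow M k u s')"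

definition irreducible_chain :: "('s::finite \<Rightarrow> 's \<Rightarrow> real) \<Rightarrow> bool" where
  "irreducible_chain M \<longleftrightarrow> (\<forall>s s'. \<exists>k. mpow M k s s' > 0)"

definition period :: "('s::finite \<Rightarrow> 's \<Rightarrow> real) \<Rightarrow> 's \<Rightarrow> nat" where
  "period M s = Gcd {k. k > 0 \<and> mpow M k s s > 0}"

definition aperiodic_chain :: "('s::finite \<Rightarrow> 's \<Rightarrow> real) \<Rightarrow> bool" where
  "aperiodic_chain M \<longleftrightarrow> (\<forall>s. period M s = 1)"

end

theory Submission
  imports Defs
begin

lemma delta_sum:
  fixes h :: "'s::finite \<Rightarrow> real"
  shows "(\<Sum>s'\<in>UNIV. (if s = s' then 1 else 0) * h s') = h s"
proof -
  have "(\<Sum>s'\<in>UNIV. (if s = s' then 1 else 0) * h s') = (\<Sum>s'\<in>UNIV. if s = s' then h s' else 0)"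
    by (intro sum.cong) auto
  then show ?thesis by simp
qed

lemma pp_nonneg:
  assumes "stochastic P"
  shows "policy_pow P pol t s s' \<ge> 0"
  using assms
  by (induction t arbitrary: s) (auto simp: stochastic_def intro!: sum_nonneg mult_nonneg_nonneg)

lemma pp_sum:
  assumes "stochastic P"
  shows "(\<Sum>s'\<in>UNIV. policy_pow P pol t s s') = 1"
proof (induction t arbitrary: s)
  case 0
  then show ?case by simp
next
  case (Suc t)
  have "(\<Sum>s'\<in>UNIV. policy_pow P pol (Suc t) s s')
      = (\<Sum>u\<in>UNIV. P s (pol s) u * (\<Sum>s'\<in>UNIV. policy_pow P pol t u s'))"
  proof -
    have "(\<Sum>s'\<in>UNIV. policy_pow P pol (Suc t) s s') = (\<Sum>s'\<in>UNIV. \<Sum>u\<in>UNIV. P s (pol s) u * policy_pow P pol t u s')"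
      by simp
    also have "\<dots> = (\<Sum>u\<in>UNIV. \<Sum>s'\<in>UNIV. P s (pol s) u * policy_pow P pol t u s')" by (rule sum.swap)
    also have "\<dots> = (\<Sum>u\<in>UNIV. P s (pol s) u * (\<Sum>s'\<in>UNIV. policy_pow P pol t u s'))" by (simp add: sum_distrib_left)
    finally show ?thesis .
  qed
  also have "\<dots> = 1" using Suc assms by (simp add: stochastic_def)
  finally show ?case .
qed

lemma pp_le1:
  assumes "stochastic P"
  shows "policy_pow P pol t s s' \<le> 1"
proof -
  have "policy_pow P pol t s s' \<le> (\<Sum>x\<in>UNIV. policy_pow P pol t s x)"
    by (rule member_le_sum) (auto simp: pp_nonneg[OF assms])
  then show ?thesis using pp_sum[OF assms] by simp
qed

lemma pv_eq:
  assumes st: "stochastic P" and g0: "0 \<le> g" and g1: "g < 1"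
  shows "policy_value P r g pol s = r s (pol s) + g * (\<Sum>u\<in>UNIV. P s (pol s) u * policy_value P r g pol u)"
proof -
  define f where "f t s = (\<Sum>s'\<in>UNIV. policy_pow P pol t s s' * r s' (pol s'))" for t s
  define B where "B = (\<Sum>s'\<in>UNIV. \<bar>r s' (pol s')\<bar>)"
  have fb: "\<bar>f t x\<bar> \<le> B" for t x
  proof -
    have "\<bar>f t x\<bar> \<le> (\<Sum>s'\<in>UNIV. \<bar>policy_pow P pol t x s' * r s' (pol s')\<bar>)"
      unfolding f_def by (rule sum_abs)
    also have "\<dots> \<le> B" unfolding B_def
      by (rule sum_mono) (auto simp: abs_mult pp_nonneg[OF st] pp_le1[OF st] intro: mult_left_le_one_le)
    finally show ?thesis .
  qed
  have sm: "summable (\<lambda>t. g ^ t * f t x)" for x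
  proof (rule summable_comparison_test[of _ "\<lambda>t. B * g ^ t"])
    show "\<exists>N. \<forall>n\<ge>N. norm (g ^ n * f n x) \<le> B * g ^ n"
    proof (intro exI allI impI)
      fix n :: nat
      have "g ^ n * \<bar>f n x\<bar> \<le> g ^ n * B" using fb g0 by (intro mult_left_mono) auto
      then show "norm (g ^ n * f n x) \<le> B * g ^ n" using g0 by (simp add: abs_mult mult.commute)
    qed
    show "summable (\<lambda>t. B * g ^ t)" using g0 g1 by (intro summable_mult summable_geometric) simp
  qed
  have fS: "f (Suc t) x = (\<Sum>u\<in>UNIV. P x (pol x) u * f t u)" for t x
  proof -
    have "f (Suc t) x = (\<Sum>s'\<in>UNIV. \<Sum>u\<in>UNIV. P x (pol x) u * policy_pow P pol t u s' * r s' (pol s'))"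
      unfolding f_def by (simp add: sum_distrib_right)
    also have "\<dots> = (\<Sum>u\<in>UNIV. \<Sum>s'\<in>UNIV. P x (pol x) u * policy_pow P pol t u s' * r s' (pol s'))"
      by (rule sum.swap)
    also have "\<dots> = (\<Sum>u\<in>UNIV. P x (pol x) u * f t u)"
      unfolding f_def by (simp add: sum_distrib_left mult.assoc)
    finally show ?thesis .
  qed
  have pv: "policy_value P r g pol x = (\<Sum>t. g ^ t * f t x)" for x
    unfolding policy_value_def f_def ..
  have "(\<Sum>t. g ^ Suc t * f (Suc t) s) = (\<Sum>t. g ^ t * f t s) - g ^ 0 * f 0 s"
    using suminf_split_head[OF sm[of s]] by simp
  moreover have "f 0 s = r s (pol s)" unfolding f_def policy_pow.simps(1) by (rule delta_sum)
  moreover have "(\<Sum>t. g ^ Suc t * f (Suc t) s) = g * (\<Sum>u\<in>UNIV. P s (pol s) u * (\<Sum>t. g ^ t * f t u))"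
  proof -
    have "(\<Sum>t. g ^ Suc t * f (Suc t) s) = (\<Sum>t. g * (\<Sum>u\<in>UNIV. P s (pol s) u * (g ^ t * f t u)))"
      by (simp add: fS sum_distrib_left mult_ac)
    also have "\<dots> = g * (\<Sum>t. (\<Sum>u\<in>UNIV. P s (pol s) u * (g ^ t * f t u)))"
      by (rule suminf_mult) (intro summable_sum summable_mult sm)
    also have "(\<Sum>t. (\<Sum>u\<in>UNIV. P s (pol s) u * (g ^ t * f t u))) = (\<Sum>u\<in>UNIV. (\<Sum>t. P s (pol s) u * (g ^ t * f t u)))"
      by (rule suminf_sum) (intro summable_mult sm)
    also have "\<dots> = (\<Sum>u\<in>UNIV. P s (pol s) u * (\<Sum>t. g ^ t * f t u))"
      by (intro sum.cong refl suminf_mult sm)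
    finally show ?thesis .
  qed
  ultimately show ?thesis unfolding pv by simp
qed

lemma opt_ge: "policy_value P r g pol s \<le> opt_value P r g s"
  unfolding opt_value_def by (rule Max_ge) auto

lemma opt_in: "\<exists>pol. opt_value P r g s = policy_value P r g pol s"
proof -
  have "opt_value P r g s \<in> range (\<lambda>pol. policy_value P r g pol s)"
    unfolding opt_value_def by (rule Max_in) auto
  then show ?thesis by auto
qed

lemma bell_ge: "r s a + g * (\<Sum>s'\<in>UNIV. P s a s' * V s') \<le> bellman P r g V s"
  unfolding bellman_def by (rule Max_ge) auto

lemma bell_in: "\<exists>a. bellman P r g V s = r s a + g * (\<Sum>s'\<in>UNIV. P s a s' * V s')"
proof -
  have "bellman P r g V s \<in> range (\<lambda>a. r s a + g * (\<Sum>s'\<in>UNIV. P s a s' * V s'))"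
    unfolding bellman_def by (rule Max_in) auto
  then show ?thesis by auto
qed


lemma mpow_nonneg:
  assumes "\<And>s s'. M s s' \<ge> 0"
  shows "mpow M k s s' \<ge> 0"
  using assms by (induction k arbitrary: s) (auto intro!: sum_nonneg mult_nonneg_nonneg)

lemma mpow_sum:
  assumes "\<And>s. (\<Sum>s'\<in>UNIV. M s s') = 1"
  shows "(\<Sum>s'\<in>UNIV. mpow M k s s') = 1"
proof (induction k arbitrary: s)
  case 0
  then show ?case by simp
next
  case (Suc k)
  have "(\<Sum>s'\<in>UNIV. mpow M (Suc k) s s') = (\<Sum>u\<in>UNIV. M s u * (\<Sum>s'\<in>UNIV. mpow M k u s'))"
  proof -
    have "(\<Sum>s'\<in>UNIV. mpow M (Suc k) s s') = (\<Sum>s'\<in>UNIV. \<Sum>u\<in>UNIV. M s u * mpow M k u s')"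
      by simp
    also have "\<dots> = (\<Sum>u\<in>UNIV. \<Sum>s'\<in>UNIV. M s u * mpow M k u s')" by (rule sum.swap)
    also have "\<dots> = (\<Sum>u\<in>UNIV. M s u * (\<Sum>s'\<in>UNIV. mpow M k u s'))" by (simp add: sum_distrib_left)
    finally show ?thesis .
  qed
  also have "\<dots> = 1" using Suc assms by simp
  finally show ?case .
qed

lemma max_exists: "\<exists>s0. \<forall>s. (D::'s::finite \<Rightarrow> real) s \<le> D s0"
proof -
  have "Max (range D) \<in> range D" by (rule Max_in) auto
  then obtain s0 where "D s0 = Max (range D)" by (metis imageE)
  then show ?thesis by (metis Max_ge finite UNIV_I finite_imageI image_eqI)
qed

lemma avg_le_max:
  fixes p :: "'s::finite \<Rightarrow> real"
  assumes "\<And>s. p s \<ge> 0" "(\<Sum>s\<in>UNIV. p s) = 1" "\<And>s. e s \<le> m"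
  shows "(\<Sum>s\<in>UNIV. p s * e s) \<le> m"
proof -
  have "(\<Sum>s\<in>UNIV. p s * e s) \<le> (\<Sum>s\<in>UNIV. p s * m)"
    using assms by (intro sum_mono mult_left_mono) auto
  also have "\<dots> = m" using assms(2) by (simp add: sum_distrib_right[symmetric])
  finally show ?thesis .
qed

lemma vstar_fix:
  assumes st: "stochastic P" and g0: "0 \<le> g" and g1: "g < 1"
    and dpos: "\<delta> > 0"
    and uo: "\<forall>s a'. a' \<noteq> pistar s \<longrightarrow>
        r s (pistar s) + g * (\<Sum>s'\<in>UNIV. P s (pistar s) s' * opt_value P r g s')
        - r s a' - g * (\<Sum>s'\<in>UNIV. P s a' s' * opt_value P r g s') \<ge> \<delta>"
  shows "opt_value P r g s = r s (pistar s) + g * (\<Sum>s'\<in>UNIV. P s (pistar s) s' * opt_value P r g s')"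
proof -
  define V where "V = opt_value P r g"
  define W where "W = policy_value P r g pistar"
  have act: "r x a + g * (\<Sum>s'\<in>UNIV. P x a s' * V s') \<le> r x (pistar x) + g * (\<Sum>s'\<in>UNIV. P x (pistar x) s' * V s')" for x a
    using uo[rule_format, of a x] dpos unfolding V_def by (cases "a = pistar x") auto
  have up: "V x \<le> r x (pistar x) + g * (\<Sum>s'\<in>UNIV. P x (pistar x) s' * V s')" for x
  proof -
    obtain pol where pol: "V x = policy_value P r g pol x" using opt_in unfolding V_def by metis
    have "V x = r x (pol x) + g * (\<Sum>u\<in>UNIV. P x (pol x) u * policy_value P r g pol u)"
      using pol pv_eq[OF st g0 g1] by metis
    also have "\<dots> \<le> r x (pol x) + g * (\<Sum>u\<in>UNIV. P x (pol x) u * V u)"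
      using st g0 unfolding V_def stochastic_def
      by (intro add_left_mono mult_left_mono sum_mono mult_left_mono opt_ge) auto
    also have "\<dots> \<le> r x (pistar x) + g * (\<Sum>s'\<in>UNIV. P x (pistar x) s' * V s')" by (rule act)
    finally show ?thesis .
  qed
  have Weq: "W x = r x (pistar x) + g * (\<Sum>s'\<in>UNIV. P x (pistar x) s' * W s')" for x
    unfolding W_def by (rule pv_eq[OF st g0 g1])
  define D where "D x = V x - W x" for x
  have Dnn: "D x \<ge> 0" for x unfolding D_def V_def W_def using opt_ge by auto
  obtain s0 where s0: "\<forall>x. D x \<le> D s0" using max_exists by blast
  have "D s0 \<le> g * (\<Sum>s'\<in>UNIV. P s0 (pistar s0) s' * D s')"
  proof -
    have h: "g * (\<Sum>s'\<in>UNIV. P s0 (pistar s0) s' * D s') = g * (\<Sum>s'\<in>UNIV. P s0 (pistar s0) s' * V s')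
        - g * (\<Sum>s'\<in>UNIV. P s0 (pistar s0) s' * W s')"
      unfolding D_def by (simp add: algebra_simps sum_subtractf)
    have "D s0 = V s0 - W s0" by (simp add: D_def)
    then show ?thesis using h up[of s0] Weq[of s0] by linarith
  qed
  also have "\<dots> \<le> g * D s0"
    using st s0 g0 unfolding stochastic_def by (intro mult_left_mono avg_le_max) auto
  finally have "D s0 \<le> g * D s0" .
  then have "(1 - g) * D s0 \<le> 0" by (simp add: algebra_simps)
  then have "D s0 \<le> 0" using g1 by (simp add: mult_le_0_iff)
  then have "D x = 0" for x using s0 Dnn by (meson order.trans order.antisym)
  then have "V = W" unfolding D_def by auto
  then show ?thesis using Weq unfolding V_def by metis
qed


theorem theorem1:
  fixes P :: "'s::finite \<Rightarrow> 'a::finite \<Rightarrow> 's \<Rightarrow> real"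
    and r :: "'s \<Rightarrow> 'a \<Rightarrow> real"
    and g :: real
    and pistar :: "'s \<Rightarrow> 'a"
    and \<delta> :: real
    and N :: nat
    and V0 :: "'s \<Rightarrow> real"
  assumes stoch: "stochastic P"
    and g_nonneg: "0 \<le> g" and g_lt1: "g < 1"
    and delta_pos: "\<delta> > 0"
    and unique_opt: "\<forall>s a'. a' \<noteq> pistar s \<longrightarrow>
        r s (pistar s) + g * (\<Sum>s'\<in>UNIV. P s (pistar s) s' * opt_value P r g s')
        - r s a' - g * (\<Sum>s'\<in>UNIV. P s a' s' * opt_value P r g s') \<ge> \<delta>"
    and irred: "irreducible_chain (\<lambda>s s'. P s (pistar s) s')"
    and aper: "aperiodic_chain (\<lambda>s s'. P s (pistar s) s')"
    and N_ge1: "N \<ge> 1"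
    and N_pos: "\<forall>s s'. mpow (\<lambda>s s'. P s (pistar s) s') N s s' > 0"
  shows "\<exists>\<tau>. 0 < \<tau> \<and> \<tau> < 1 \<and>
     span (\<lambda>s. value_iter P r g V0 N s - opt_value P r g s)
       \<le> g ^ N * \<tau> * span (\<lambda>s. V0 s - opt_value P r g s)"
proof -
  define Vs where "Vs = opt_value P r g"
  define M where "M = (\<lambda>s s'. P s (pistar s) s')"
  define e where "e k s = value_iter P r g V0 k s - Vs s" for k s
  have Pnn: "P s a s' \<ge> 0" for s a s' using stoch by (simp add: stochastic_def)
  have Psum: "(\<Sum>s'\<in>UNIV. P s a s') = 1" for s a using stoch by (simp add: stochastic_def)
  have Mnn: "\<And>s s'. M s s' \<ge> 0" unfolding M_def using Pnn by auto
  have Msum: "\<And>s. (\<Sum>s'\<in>UNIV. M s s') = 1" unfolding M_def using Psum by auto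
  have vfix: "Vs x = r x (pistar x) + g * (\<Sum>s'\<in>UNIV. P x (pistar x) s' * Vs s')" for x
    unfolding Vs_def by (rule vstar_fix[OF stoch g_nonneg g_lt1 delta_pos unique_opt])
  have act: "r x a + g * (\<Sum>s'\<in>UNIV. P x a s' * Vs s') \<le> Vs x" for x a
  proof (cases "a = pistar x")
    case True
    have "Vs x = r x (pistar x) + g * (\<Sum>s'\<in>UNIV. P x (pistar x) s' * Vs s')" by (rule vfix)
    then show ?thesis using True by (metis order.refl)
  next
    case False
    have "\<delta> \<le> r x (pistar x) + g * (\<Sum>s'\<in>UNIV. P x (pistar x) s' * Vs s')
        - r x a - g * (\<Sum>s'\<in>UNIV. P x a s' * Vs s')"
      using unique_opt False unfolding Vs_def by blast
    moreover have "Vs x = r x (pistar x) + g * (\<Sum>s'\<in>UNIV. P x (pistar x) s' * Vs s')" by (rule vfix)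
    ultimately show ?thesis using delta_pos by linarith
  qed
  have step_up: "e (Suc k) x \<le> g * m" if hm: "\<And>y. e k y \<le> m" for k x m
  proof -
    obtain a where a: "value_iter P r g V0 (Suc k) x = r x a + g * (\<Sum>s'\<in>UNIV. P x a s' * value_iter P r g V0 k s')"
      using bell_in[of P r g "value_iter P r g V0 k" x] by auto
    have "e (Suc k) x \<le> r x a + g * (\<Sum>s'\<in>UNIV. P x a s' * value_iter P r g V0 k s')
          - (r x a + g * (\<Sum>s'\<in>UNIV. P x a s' * Vs s'))"
      unfolding e_def using a act[of x a] by linarith
    also have "\<dots> = g * (\<Sum>s'\<in>UNIV. P x a s' * e k s')"
      unfolding e_def by (simp add: algebra_simps sum_subtractf)
    also have "\<dots> \<le> g * m"
      using g_nonneg Pnn Psum hm by (intro mult_left_mono avg_le_max) auto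
    finally show ?thesis .
  qed
  have step_low: "e (Suc k) x \<ge> g * (\<Sum>u\<in>UNIV. M x u * e k u)" for k x
  proof -
    have "r x (pistar x) + g * (\<Sum>s'\<in>UNIV. P x (pistar x) s' * value_iter P r g V0 k s') \<le> value_iter P r g V0 (Suc k) x"
      using bell_ge by simp
    moreover have "g * (\<Sum>u\<in>UNIV. M x u * e k u) = (r x (pistar x) + g * (\<Sum>s'\<in>UNIV. P x (pistar x) s' * value_iter P r g V0 k s'))
       - (r x (pistar x) + g * (\<Sum>s'\<in>UNIV. P x (pistar x) s' * Vs s'))"
      unfolding e_def M_def by (simp add: algebra_simps sum_subtractf)
    ultimately show ?thesis using vfix[of x] unfolding e_def by linarith
  qed
  define m0 where "m0 = Min (range (e 0))"
  define M0 where "M0 = Max (range (e 0))"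
  have m0le: "m0 \<le> e 0 x" for x unfolding m0_def by (rule Min_le) auto
  have M0ge: "e 0 x \<le> M0" for x unfolding M0_def by (rule Max_ge) auto
  have upk: "e k x \<le> g ^ k * M0" for k x
  proof (induction k arbitrary: x)
    case 0 then show ?case using M0ge by simp
  next
    case (Suc k)
    have "e (Suc k) x \<le> g * (g ^ k * M0)" by (rule step_up) (rule Suc.IH)
    then show ?case by simp
  qed
  have lowk: "e k x \<ge> g ^ k * (\<Sum>s'\<in>UNIV. mpow M k x s' * e 0 s')" for k x
  proof (induction k arbitrary: x)
    case 0
    have "(\<Sum>s'\<in>UNIV. mpow M 0 x s' * e 0 s') = e 0 x"
      unfolding mpow.simps(1) by (rule delta_sum)
    then show ?case by simp
  next
    case (Suc k)
    have A: "(\<Sum>s'\<in>UNIV. mpow M (Suc k) x s' * e 0 s')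
        = (\<Sum>u\<in>UNIV. M x u * (\<Sum>s'\<in>UNIV. mpow M k u s' * e 0 s'))"
    proof -
      have "(\<Sum>s'\<in>UNIV. mpow M (Suc k) x s' * e 0 s')
          = (\<Sum>s'\<in>UNIV. \<Sum>u\<in>UNIV. M x u * mpow M k u s' * e 0 s')"
        by (simp add: sum_distrib_right)
      also have "\<dots> = (\<Sum>u\<in>UNIV. \<Sum>s'\<in>UNIV. M x u * mpow M k u s' * e 0 s')"
        by (rule sum.swap)
      also have "\<dots> = (\<Sum>u\<in>UNIV. M x u * (\<Sum>s'\<in>UNIV. mpow M k u s' * e 0 s'))"
        by (simp add: sum_distrib_left mult.assoc)
      finally show ?thesis .
    qed
    have "g ^ Suc k * (\<Sum>s'\<in>UNIV. mpow M (Suc k) x s' * e 0 s')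
        = g * (\<Sum>u\<in>UNIV. M x u * (g ^ k * (\<Sum>s'\<in>UNIV. mpow M k u s' * e 0 s')))"
      unfolding A by (simp add: sum_distrib_left mult_ac)
    also have "\<dots> \<le> g * (\<Sum>u\<in>UNIV. M x u * e k u)"
      using g_nonneg Mnn Suc.IH by (intro mult_left_mono sum_mono) auto
    also have "\<dots> \<le> e (Suc k) x" by (rule step_low)
    finally show ?case .
  qed
  define c where "c = Min (range (\<lambda>(s, s'). mpow M N s s'))"
  have cle: "c \<le> mpow M N s s'" for s s' unfolding c_def by (rule Min_le) auto
  have cpos: "c > 0"
  proof -
    have "c \<in> range (\<lambda>(s, s'). mpow M N s s')" unfolding c_def by (rule Min_in) auto
    then show ?thesis using N_pos unfolding M_def by auto
  qed
  have c1: "c \<le> 1"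
  proof -
    fix s :: 's
    have "mpow M N s s \<le> (\<Sum>x\<in>UNIV. mpow M N s x)"
      by (rule member_le_sum) (auto intro: mpow_nonneg Mnn)
    moreover have "(\<Sum>x\<in>UNIV. mpow M N s x) = 1" by (rule mpow_sum[OF Msum])
    ultimately show ?thesis using cle[of s s] by linarith
  qed
  obtain smax where smax: "e 0 smax = M0"
  proof -
    have "M0 \<in> range (e 0)" unfolding M0_def by (rule Max_in) auto
    then show ?thesis using that by (metis imageE)
  qed
  have avg: "(\<Sum>s'\<in>UNIV. mpow M N x s' * e 0 s') \<ge> m0 + c * (M0 - m0)" for x
  proof -
    have "(\<Sum>s'\<in>UNIV. mpow M N x s' * e 0 s') - m0 = (\<Sum>s'\<in>UNIV. mpow M N x s' * (e 0 s' - m0))"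
    proof -
      have "(\<Sum>s'\<in>UNIV. mpow M N x s' * (e 0 s' - m0)) = (\<Sum>s'\<in>UNIV. mpow M N x s' * e 0 s') - (\<Sum>s'\<in>UNIV. mpow M N x s' * m0)"
        by (simp add: right_diff_distrib sum_subtractf)
      moreover have "(\<Sum>s'\<in>UNIV. mpow M N x s' * m0) = m0"
        using mpow_sum[OF Msum, where k=N and s=x] by (simp add: sum_distrib_right[symmetric])
      ultimately show ?thesis by linarith
    qed
    also have "\<dots> \<ge> mpow M N x smax * (e 0 smax - m0)"
      by (rule member_le_sum) (auto intro!: mult_nonneg_nonneg mpow_nonneg Mnn simp: m0le)
    moreover have "mpow M N x smax * (e 0 smax - m0) \<ge> c * (M0 - m0)"
      using mult_right_mono[OF cle[of x smax], of "M0 - m0"] smax m0le[of smax] by simp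
    ultimately show ?thesis by linarith
  qed
  have eN_low: "e N x \<ge> g ^ N * (m0 + c * (M0 - m0))" for x
    using lowk[of N x] avg[of x] g_nonneg
    by (meson order.trans mult_left_mono zero_le_power)
  have Sge: "M0 - m0 \<ge> 0" using m0le[of smax] M0ge[of smax] by simp
  have spanN: "span (e N) \<le> g ^ N * (1 - c) * (M0 - m0)"
  proof -
    have "Max (range (e N)) \<le> g ^ N * M0" by (rule Max.boundedI) (auto simp: upk)
    moreover have "Min (range (e N)) \<ge> g ^ N * (m0 + c * (M0 - m0))" by (rule Min.boundedI) (auto simp: eN_low)
    moreover have "g ^ N * M0 - g ^ N * (m0 + c * (M0 - m0)) = g ^ N * (1 - c) * (M0 - m0)"
      by (simp add: algebra_simps)
    ultimately show ?thesis unfolding span_def by linarith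
  qed
  have span0: "span (e 0) = M0 - m0" unfolding span_def M0_def m0_def ..
  define \<tau> where "\<tau> = max (1 - c) (1/2)"
  have ineq: "g ^ N * (1 - c) * (M0 - m0) \<le> g ^ N * \<tau> * (M0 - m0)"
    unfolding \<tau>_def using g_nonneg Sge by (intro mult_right_mono mult_left_mono) auto
  have eN: "(\<lambda>s. value_iter P r g V0 N s - opt_value P r g s) = e N"
    unfolding e_def Vs_def by (rule refl)
  have e0: "(\<lambda>s. V0 s - opt_value P r g s) = e 0"
    unfolding e_def Vs_def by simp
  have main: "span (e N) \<le> g ^ N * \<tau> * span (e 0)"
    unfolding span0 using spanN ineq by linarith
  have t0: "0 < \<tau>" unfolding \<tau>_def by simp
  have t1: "\<tau> < 1" unfolding \<tau>_def using cpos by simp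
  show ?thesis unfolding eN e0 using main t0 t1 by blast
qed

end
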